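(* Let $\mathcal{C}$ be a category and $F\colon\mathcal{C}\to\mathcal{E}ns$ a functor satisfying Grothendieck's axioms G0–G6 below (in either variant). Then the full subcategory $\mathcal{C}on(\mathcal{C})$ of non-empty connected objects of $\mathcal{C}$, together with the restriction of $F$ to it, satisfies the axioms C0–C3 below.
   Context: An arrow $f\colon X\to Y$ is a strict epimorphism if for every $g\colon X\to Z$ compatible with $f$ (for all objects $C$ and $u,v\colon C\to X$, $f\circ u=f\circ v$ implies $g\circ u=g\circ v$) there is a unique $k$ with $g=k\circ f$. For a group $H$ acting on an object $X$ by automorphisms (homomorphism $H\to\mathrm{Aut}(X)^{op}$) the quotient $q\colon X\to X/H$ is universal among arrows with $q\circ h=q$ for all $h\in H$. An object $X$ is finite if $F(X)$ is finite. An object $A$ is connected if $A\cong A_1\amalg A_2$ implies $A_1$ or $A_2$ is initial; non-empty means not initial. Grothendieck's axioms (two variants: "coproducts" in G2, G5 means either arbitrary small coproducts, or only finite coproducts): G0: for every $X$ and $x\in F(X)$ there are a finite object $Y$, $y\in F(Y)$ and $f\colon Y\to X$ with $F(f)(y)=x$. G1: $\mathcal{C}$ has a terminal object and fibre products. G2: $\mathcal{C}$ has an initial object, coproducts, and quotients of objects by actions of finite groups. G3: every $f\colon X\to Y$ factors as a strict epimorphism $X\to I$ followed by a monomorphism $I\to Y$, and there is a subobject $J\to Y$ with $I\amalg J\cong Y$ via the induced map. G4: $F$ preserves finite limits. G5: $F$ preserves the initial object, coproducts, quotients by actions of finite groups, and sends strict epimorphisms to surjections. G6: $F$ reflects isomorphisms.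 For a pair $(\mathcal{D},F)$, the diagram $\Gamma_F$ has objects $(a,A)$, $a\in F(A)$, and morphisms $(a,A)\to(a',A')$ the arrows $f$ with $F(f)(a)=a'$, preordered by existence of morphisms. Axioms C0–C3 for $(\mathcal{D},F)$: C0: $F(A)\neq\emptyset$ for all $A$ and every arrow of $\mathcal{D}$ is a strict epimorphism. C1: for every $A$ and finite group $H$ acting on $A$, the quotient $A\to A/H$ exists in $\mathcal{D}$ and $F(A)/H\to F(A/H)$ is bijective. C2: each $F(A)$ is finite and $F$ sends strict epimorphisms to surjections. C3: every finite family of objects of $\Gamma_F$ has a meet. *)

theory Defs
  imports "HOL-Algebra.Group"
begin

record ('o, 'a) cat =
  cat_obj :: "'o set"
  cat_arr :: "'a set"
  cat_dom :: "'a \<Rightarrow> 'o"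
  cat_cod :: "'a \<Rightarrow> 'o"
  cat_id  :: "'o \<Rightarrow> 'a"
  cat_comp :: "'a \<Rightarrow> 'a \<Rightarrow> 'a"   (* cat_comp C g f = g \<circ> f *)

definition hom :: "('o,'a) cat \<Rightarrow> 'o \<Rightarrow> 'o \<Rightarrow> 'a set" where
  "hom C X Y = {f \<in> cat_arr C. cat_dom C f = X \<and> cat_cod C f = Y}"

definition category :: "('o,'a) cat \<Rightarrow> bool" where
  "category C \<longleftrightarrow>
     (\<forall>f\<in>cat_arr C. cat_dom C f \<in> cat_obj C \<and> cat_cod C f \<in> cat_obj C) \<and>
     (\<forall>X\<in>cat_obj C. cat_id C X \<in> hom C X X) \<and>
     (\<forall>f\<in>cat_arr C. cat_comp C f (cat_id C (cat_dom C f)) = f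
                    \<and> cat_comp C (cat_id C (cat_cod C f)) f = f) \<and>
     (\<forall>f\<in>cat_arr C. \<forall>g\<in>cat_arr C. cat_cod C f = cat_dom C g \<longrightarrow>
          cat_comp C g f \<in> hom C (cat_dom C f) (cat_cod C g)) \<and>
     (\<forall>f\<in>cat_arr C. \<forall>g\<in>cat_arr C. \<forall>h\<in>cat_arr C.
          cat_cod C f = cat_dom C g \<and> cat_cod C g = cat_dom C h \<longrightarrow>
          cat_comp C h (cat_comp C g f) = cat_comp C (cat_comp C h g) f)"

definition set_functor :: "('o,'a) cat \<Rightarrow> ('o \<Rightarrow> 'x set) \<Rightarrow> ('a \<Rightarrow> 'x \<Rightarrow> 'x) \<Rightarrow> bool" where
  "set_functor C Fo Fa \<longleftrightarrow>
     (\<forall>f\<in>cat_arr C. \<forall>x\<in>Fo (cat_dom C f). Fa f x \<in> Fo (cat_cod C f)) \<and>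
     (\<forall>X\<in>cat_obj C. \<forall>x\<in>Fo X. Fa (cat_id C X) x = x) \<and>
     (\<forall>f\<in>cat_arr C. \<forall>g\<in>cat_arr C. cat_cod C f = cat_dom C g \<longrightarrow>
          (\<forall>x\<in>Fo (cat_dom C f). Fa (cat_comp C g f) x = Fa g (Fa f x)))"

definition full_sub :: "('o,'a) cat \<Rightarrow> ('o \<Rightarrow> bool) \<Rightarrow> ('o,'a) cat" where
  "full_sub C P = C\<lparr> cat_obj := {X \<in> cat_obj C. P X},
                     cat_arr := {f \<in> cat_arr C. P (cat_dom C f) \<and> P (cat_cod C f)} \<rparr>"

definition is_initial :: "('o,'a) cat \<Rightarrow> 'o \<Rightarrow> bool" where
  "is_initial C I \<longleftrightarrow> I \<in> cat_obj C \<and> (\<forall>Z\<in>cat_obj C. \<exists>!f. f \<in> hom C I Z)"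

definition is_terminal :: "('o,'a) cat \<Rightarrow> 'o \<Rightarrow> bool" where
  "is_terminal C T \<longleftrightarrow> T \<in> cat_obj C \<and> (\<forall>Z\<in>cat_obj C. \<exists>!f. f \<in> hom C Z T)"

definition mono :: "('o,'a) cat \<Rightarrow> 'a \<Rightarrow> bool" where
  "mono C f \<longleftrightarrow> f \<in> cat_arr C \<and>
     (\<forall>W\<in>cat_obj C. \<forall>u\<in>hom C W (cat_dom C f). \<forall>v\<in>hom C W (cat_dom C f).
         cat_comp C f u = cat_comp C f v \<longrightarrow> u = v)"

definition iso :: "('o,'a) cat \<Rightarrow> 'a \<Rightarrow> bool" where
  "iso C f \<longleftrightarrow> f \<in> cat_arr C \<and>
     (\<exists>g\<in>hom C (cat_cod C f) (cat_dom C f).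
         cat_comp C g f = cat_id C (cat_dom C f) \<and> cat_comp C f g = cat_id C (cat_cod C f))"

definition compatible :: "('o,'a) cat \<Rightarrow> 'a \<Rightarrow> 'a \<Rightarrow> bool" where
  "compatible C f g \<longleftrightarrow> g \<in> cat_arr C \<and> cat_dom C g = cat_dom C f \<and>
     (\<forall>W\<in>cat_obj C. \<forall>u\<in>hom C W (cat_dom C f). \<forall>v\<in>hom C W (cat_dom C f).
         cat_comp C f u = cat_comp C f v \<longrightarrow> cat_comp C g u = cat_comp C g v)"

definition strict_epi :: "('o,'a) cat \<Rightarrow> 'a \<Rightarrow> bool" where
  "strict_epi C f \<longleftrightarrow> f \<in> cat_arr C \<and>
     (\<forall>g. compatible C f g \<longrightarrow>
          (\<exists>!k. k \<in> hom C (cat_cod C f) (cat_cod C g) \<and> g = cat_comp C k f))"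

definition is_coproduct :: "('o,'a) cat \<Rightarrow> 'o \<Rightarrow> 'o \<Rightarrow> 'o \<Rightarrow> 'a \<Rightarrow> 'a \<Rightarrow> bool" where
  "is_coproduct C A1 A2 S i1 i2 \<longleftrightarrow> i1 \<in> hom C A1 S \<and> i2 \<in> hom C A2 S \<and>
     (\<forall>Z\<in>cat_obj C. \<forall>g1\<in>hom C A1 Z. \<forall>g2\<in>hom C A2 Z.
         \<exists>!k. k \<in> hom C S Z \<and> cat_comp C k i1 = g1 \<and> cat_comp C k i2 = g2)"

definition is_pullback :: "('o,'a) cat \<Rightarrow> 'a \<Rightarrow> 'a \<Rightarrow> 'o \<Rightarrow> 'a \<Rightarrow> 'a \<Rightarrow> bool" where
  "is_pullback C f g P p1 p2 \<longleftrightarrow> f \<in> cat_arr C \<and> g \<in> cat_arr C \<and>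
     cat_cod C f = cat_cod C g \<and>
     p1 \<in> hom C P (cat_dom C f) \<and> p2 \<in> hom C P (cat_dom C g) \<and>
     cat_comp C f p1 = cat_comp C g p2 \<and>
     (\<forall>W\<in>cat_obj C. \<forall>u\<in>hom C W (cat_dom C f). \<forall>v\<in>hom C W (cat_dom C g).
         cat_comp C f u = cat_comp C g v \<longrightarrow>
         (\<exists>!k. k \<in> hom C W P \<and> cat_comp C p1 k = u \<and> cat_comp C p2 k = v))"

text \<open>A group G acting on X by automorphisms: a homomorphism G \<rightarrow> Aut(X)^op.\<close>
definition group_action :: "('o,'a) cat \<Rightarrow> 'g monoid \<Rightarrow> 'o \<Rightarrow> ('g \<Rightarrow> 'a) \<Rightarrow> bool" where
  "group_action C G X \<rho> \<longleftrightarrow> group G \<and> X \<in> cat_obj C \<and>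
     (\<forall>h\<in>carrier G. \<rho> h \<in> hom C X X) \<and>
     \<rho> \<one>\<^bsub>G\<^esub> = cat_id C X \<and>
     (\<forall>g\<in>carrier G. \<forall>h\<in>carrier G. \<rho> (g \<otimes>\<^bsub>G\<^esub> h) = cat_comp C (\<rho> h) (\<rho> g))"

definition is_quotient :: "('o,'a) cat \<Rightarrow> 'g monoid \<Rightarrow> 'o \<Rightarrow> ('g \<Rightarrow> 'a) \<Rightarrow> 'o \<Rightarrow> 'a \<Rightarrow> bool" where
  "is_quotient C G X \<rho> Q q \<longleftrightarrow> q \<in> hom C X Q \<and>
     (\<forall>h\<in>carrier G. cat_comp C q (\<rho> h) = q) \<and>
     (\<forall>Z\<in>cat_obj C. \<forall>g\<in>hom C X Z. (\<forall>h\<in>carrier G. cat_comp C g (\<rho> h) = g) \<longrightarrow>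
         (\<exists>!k. k \<in> hom C Q Z \<and> cat_comp C k q = g))"

definition connected_obj :: "('o,'a) cat \<Rightarrow> 'o \<Rightarrow> bool" where
  "connected_obj C A \<longleftrightarrow> A \<in> cat_obj C \<and>
     (\<forall>A1 A2 i1 i2. is_coproduct C A1 A2 A i1 i2 \<longrightarrow> is_initial C A1 \<or> is_initial C A2)"

text \<open>Con(C): the full subcategory of non-empty (= non-initial) connected objects.\<close>
definition Con :: "('o,'a) cat \<Rightarrow> ('o,'a) cat" where
  "Con C = full_sub C (\<lambda>A. connected_obj C A \<and> \<not> is_initial C A)"

text \<open>The canonical map F(X)/H \<rightarrow> F(Q) induced by F(q) is bijective.\<close>
definition quotient_fibre_bij ::
  "('o \<Rightarrow> 'x set) \<Rightarrow> ('a \<Rightarrow> 'x \<Rightarrow> 'x) \<Rightarrow> 'g monoid \<Rightarrow> 'o \<Rightarrow> ('g \<Rightarrow> 'a) \<Rightarrow> 'o \<Rightarrow> 'a \<Rightarrow> bool" where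
  "quotient_fibre_bij Fo Fa G X \<rho> Q q \<longleftrightarrow> Fa q ` Fo X = Fo Q \<and>
     (\<forall>x\<in>Fo X. \<forall>y\<in>Fo X. Fa q x = Fa q y \<longleftrightarrow> (\<exists>h\<in>carrier G. Fa (\<rho> h) x = y))"

section \<open>Grothendieck's axioms (finite-coproduct variant)\<close>

definition G0 :: "('o,'a) cat \<Rightarrow> ('o \<Rightarrow> 'x set) \<Rightarrow> ('a \<Rightarrow> 'x \<Rightarrow> 'x) \<Rightarrow> bool" where
  "G0 C Fo Fa \<longleftrightarrow> (\<forall>X\<in>cat_obj C. \<forall>x\<in>Fo X. \<exists>Y y f.
      Y \<in> cat_obj C \<and> finite (Fo Y) \<and> y \<in> Fo Y \<and> f \<in> hom C Y X \<and> Fa f y = x)"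

definition G1 :: "('o,'a) cat \<Rightarrow> bool" where
  "G1 C \<longleftrightarrow> (\<exists>T. is_terminal C T) \<and>
     (\<forall>f\<in>cat_arr C. \<forall>g\<in>cat_arr C. cat_cod C f = cat_cod C g \<longrightarrow>
        (\<exists>P p1 p2. is_pullback C f g P p1 p2))"

definition G2 :: "('o,'a) cat \<Rightarrow> 'g itself \<Rightarrow> bool" where
  "G2 C (_ :: 'g itself) \<longleftrightarrow> (\<exists>I. is_initial C I) \<and>
     (\<forall>A1\<in>cat_obj C. \<forall>A2\<in>cat_obj C. \<exists>S i1 i2. is_coproduct C A1 A2 S i1 i2) \<and>
     (\<forall>(G :: 'g monoid) X \<rho>. group_action C G X \<rho> \<and> finite (carrier G) \<longrightarrow>
        (\<exists>Q q. is_quotient C G X \<rho> Q q))"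

definition G3 :: "('o,'a) cat \<Rightarrow> bool" where
  "G3 C \<longleftrightarrow> (\<forall>f\<in>cat_arr C. \<exists>I e m J j.
      strict_epi C e \<and> e \<in> hom C (cat_dom C f) I \<and>
      mono C m \<and> m \<in> hom C I (cat_cod C f) \<and> f = cat_comp C m e \<and>
      mono C j \<and> j \<in> hom C J (cat_cod C f) \<and>
      is_coproduct C I J (cat_cod C f) m j)"

text \<open>F preserves finite limits: it preserves the terminal object and fibre products
  (which generate all finite limits).\<close>
definition G4 :: "('o,'a) cat \<Rightarrow> ('o \<Rightarrow> 'x set) \<Rightarrow> ('a \<Rightarrow> 'x \<Rightarrow> 'x) \<Rightarrow> bool" where
  "G4 C Fo Fa \<longleftrightarrow>
     (\<forall>T. is_terminal C T \<longrightarrow> (\<exists>!x. x \<in> Fo T)) \<and>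
     (\<forall>f g P p1 p2. is_pullback C f g P p1 p2 \<longrightarrow>
        bij_betw (\<lambda>z. (Fa p1 z, Fa p2 z)) (Fo P)
          {(x, y). x \<in> Fo (cat_dom C f) \<and> y \<in> Fo (cat_dom C g) \<and> Fa f x = Fa g y})"

definition G5 :: "('o,'a) cat \<Rightarrow> ('o \<Rightarrow> 'x set) \<Rightarrow> ('a \<Rightarrow> 'x \<Rightarrow> 'x) \<Rightarrow> 'g itself \<Rightarrow> bool" where
  "G5 C Fo Fa (_ :: 'g itself) \<longleftrightarrow>
     (\<forall>I. is_initial C I \<longrightarrow> Fo I = {}) \<and>
     (\<forall>A1 A2 S i1 i2. is_coproduct C A1 A2 S i1 i2 \<longrightarrow>
        inj_on (Fa i1) (Fo A1) \<and> inj_on (Fa i2) (Fo A2) \<and>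
        Fa i1 ` Fo A1 \<inter> Fa i2 ` Fo A2 = {} \<and>
        Fa i1 ` Fo A1 \<union> Fa i2 ` Fo A2 = Fo S) \<and>
     (\<forall>(G :: 'g monoid) X \<rho> Q q. group_action C G X \<rho> \<and> finite (carrier G) \<and>
        is_quotient C G X \<rho> Q q \<longrightarrow> quotient_fibre_bij Fo Fa G X \<rho> Q q) \<and>
     (\<forall>f. strict_epi C f \<longrightarrow> Fa f ` Fo (cat_dom C f) = Fo (cat_cod C f))"

definition G6 :: "('o,'a) cat \<Rightarrow> ('o \<Rightarrow> 'x set) \<Rightarrow> ('a \<Rightarrow> 'x \<Rightarrow> 'x) \<Rightarrow> bool" where
  "G6 C Fo Fa \<longleftrightarrow> (\<forall>f\<in>cat_arr C.
      bij_betw (Fa f) (Fo (cat_dom C f)) (Fo (cat_cod C f)) \<longrightarrow> iso C f)"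

definition Gamma :: "('o,'a) cat \<Rightarrow> ('o \<Rightarrow> 'x set) \<Rightarrow> ('x \<times> 'o) set" where
  "Gamma D Fo = {(a, A). A \<in> cat_obj D \<and> a \<in> Fo A}"

definition gamma_le :: "('o,'a) cat \<Rightarrow> ('a \<Rightarrow> 'x \<Rightarrow> 'x) \<Rightarrow> 'x \<times> 'o \<Rightarrow> 'x \<times> 'o \<Rightarrow> bool" where
  "gamma_le D Fa p p' \<longleftrightarrow> (\<exists>f\<in>hom D (snd p) (snd p'). Fa f (fst p) = fst p')"

definition is_meet :: "('o,'a) cat \<Rightarrow> ('o \<Rightarrow> 'x set) \<Rightarrow> ('a \<Rightarrow> 'x \<Rightarrow> 'x)
    \<Rightarrow> ('x \<times> 'o) set \<Rightarrow> 'x \<times> 'o \<Rightarrow> bool" where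
  "is_meet D Fo Fa S m \<longleftrightarrow> m \<in> Gamma D Fo \<and> (\<forall>s\<in>S. gamma_le D Fa m s) \<and>
     (\<forall>n\<in>Gamma D Fo. (\<forall>s\<in>S. gamma_le D Fa n s) \<longrightarrow> gamma_le D Fa n m)"

definition C0 :: "('o,'a) cat \<Rightarrow> ('o \<Rightarrow> 'x set) \<Rightarrow> ('a \<Rightarrow> 'x \<Rightarrow> 'x) \<Rightarrow> bool" where
  "C0 D Fo Fa \<longleftrightarrow> (\<forall>A\<in>cat_obj D. Fo A \<noteq> {}) \<and> (\<forall>f\<in>cat_arr D. strict_epi D f)"

definition C1 :: "('o,'a) cat \<Rightarrow> ('o \<Rightarrow> 'x set) \<Rightarrow> ('a \<Rightarrow> 'x \<Rightarrow> 'x) \<Rightarrow> 'g itself \<Rightarrow> bool" where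
  "C1 D Fo Fa (_ :: 'g itself) \<longleftrightarrow>
     (\<forall>(G :: 'g monoid) A \<rho>. group_action D G A \<rho> \<and> finite (carrier G) \<longrightarrow>
        (\<exists>Q q. is_quotient D G A \<rho> Q q \<and> quotient_fibre_bij Fo Fa G A \<rho> Q q))"

definition C2 :: "('o,'a) cat \<Rightarrow> ('o \<Rightarrow> 'x set) \<Rightarrow> ('a \<Rightarrow> 'x \<Rightarrow> 'x) \<Rightarrow> bool" where
  "C2 D Fo Fa \<longleftrightarrow> (\<forall>A\<in>cat_obj D. finite (Fo A)) \<and>
     (\<forall>f. strict_epi D f \<longrightarrow> Fa f ` Fo (cat_dom D f) = Fo (cat_cod D f))"

definition C3 :: "('o,'a) cat \<Rightarrow> ('o \<Rightarrow> 'x set) \<Rightarrow> ('a \<Rightarrow> 'x \<Rightarrow> 'x) \<Rightarrow> bool" where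
  "C3 D Fo Fa \<longleftrightarrow> (\<forall>S. finite S \<and> S \<subseteq> Gamma D Fo \<longrightarrow> (\<exists>m. is_meet D Fo Fa S m))"

end

theory Submission
  imports Defs
begin

locale gal =
  fixes C :: "('o, 'a) cat" and Fo :: "'o \<Rightarrow> 'x set" and Fa :: "'a \<Rightarrow> 'x \<Rightarrow> 'x"
    and gty :: "'g itself"
  assumes cat: "category C" and fnc: "set_functor C Fo Fa"
    and g0: "G0 C Fo Fa" and g1: "G1 C" and g2: "G2 C gty" and g3: "G3 C"
    and g4: "G4 C Fo Fa" and g5: "G5 C Fo Fa gty" and g6: "G6 C Fo Fa"
begin

lemma homD: "f \<in> hom C X Y \<Longrightarrow> f \<in> cat_arr C \<and> cat_dom C f = X \<and> cat_cod C f = Y"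
  by (simp add: hom_def)

lemma homI: "f \<in> cat_arr C \<Longrightarrow> f \<in> hom C (cat_dom C f) (cat_cod C f)"
  by (simp add: hom_def)

lemma hom_obj: "f \<in> hom C X Y \<Longrightarrow> X \<in> cat_obj C \<and> Y \<in> cat_obj C"
  using cat unfolding category_def hom_def by auto

lemma comp_hom: "f \<in> hom C X Y \<Longrightarrow> g \<in> hom C Y Z \<Longrightarrow> cat_comp C g f \<in> hom C X Z"
  using cat unfolding category_def hom_def by auto

lemma assoc: "f \<in> hom C X Y \<Longrightarrow> g \<in> hom C Y Z \<Longrightarrow> h \<in> hom C Z W \<Longrightarrow>
   cat_comp C h (cat_comp C g f) = cat_comp C (cat_comp C h g) f"
  using cat unfolding category_def hom_def by auto

lemma id_hom: "X \<in> cat_obj C \<Longrightarrow> cat_id C X \<in> hom C X X"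
  using cat unfolding category_def by auto

lemma id_l: "f \<in> hom C X Y \<Longrightarrow> cat_comp C (cat_id C Y) f = f"
  using cat unfolding category_def hom_def by auto

lemma id_r: "f \<in> hom C X Y \<Longrightarrow> cat_comp C f (cat_id C X) = f"
  using cat unfolding category_def hom_def by auto

lemma F_map: "f \<in> hom C X Y \<Longrightarrow> x \<in> Fo X \<Longrightarrow> Fa f x \<in> Fo Y"
  using fnc unfolding set_functor_def hom_def by auto

lemma F_comp: "f \<in> hom C X Y \<Longrightarrow> g \<in> hom C Y Z \<Longrightarrow> x \<in> Fo X \<Longrightarrow>
   Fa (cat_comp C g f) x = Fa g (Fa f x)"
  using fnc unfolding set_functor_def hom_def by auto

lemma F_id: "X \<in> cat_obj C \<Longrightarrow> x \<in> Fo X \<Longrightarrow> Fa (cat_id C X) x = x"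
  using fnc unfolding set_functor_def by auto

lemma bij_iso: "f \<in> hom C X Y \<Longrightarrow> bij_betw (Fa f) (Fo X) (Fo Y) \<Longrightarrow>
   \<exists>g\<in>hom C Y X. cat_comp C g f = cat_id C X \<and> cat_comp C f g = cat_id C Y"
  using g6 unfolding G6_def iso_def hom_def by auto

lemma g5p: "(\<forall>I. is_initial C I \<longrightarrow> Fo I = {})"
     "(\<forall>A1 A2 S i1 i2. is_coproduct C A1 A2 S i1 i2 \<longrightarrow>
        inj_on (Fa i1) (Fo A1) \<and> inj_on (Fa i2) (Fo A2) \<and>
        Fa i1 ` Fo A1 \<inter> Fa i2 ` Fo A2 = {} \<and>
        Fa i1 ` Fo A1 \<union> Fa i2 ` Fo A2 = Fo S)"
     "(\<forall>(G :: 'g monoid) X \<rho> Q q. group_action C G X \<rho> \<and> finite (carrier G) \<and>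
        is_quotient C G X \<rho> Q q \<longrightarrow> quotient_fibre_bij Fo Fa G X \<rho> Q q)"
     "(\<forall>f. strict_epi C f \<longrightarrow> Fa f ` Fo (cat_dom C f) = Fo (cat_cod C f))"
  using g5 unfolding G5_def by simp_all

lemma g2p: "\<exists>I. is_initial C I"
   "(\<forall>A1\<in>cat_obj C. \<forall>A2\<in>cat_obj C. \<exists>S i1 i2. is_coproduct C A1 A2 S i1 i2)"
   "(\<forall>(G :: 'g monoid) X \<rho>. group_action C G X \<rho> \<and> finite (carrier G) \<longrightarrow>
        (\<exists>Q q. is_quotient C G X \<rho> Q q))"
  using g2 unfolding G2_def by simp_all

lemma initial_empty: "is_initial C I \<Longrightarrow> Fo I = {}"
  using g5p(1) by simp

lemma cop_F: "is_coproduct C A1 A2 S i1 i2 \<Longrightarrow>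
        inj_on (Fa i1) (Fo A1) \<and> inj_on (Fa i2) (Fo A2) \<and>
        Fa i1 ` Fo A1 \<inter> Fa i2 ` Fo A2 = {} \<and>
        Fa i1 ` Fo A1 \<union> Fa i2 ` Fo A2 = Fo S"
  using g5p(2) by simp

lemma se_surj: "strict_epi C f \<Longrightarrow> Fa f ` Fo (cat_dom C f) = Fo (cat_cod C f)"
  using g5p(4) by simp

lemma quot_bij: "group_action C G X \<rho> \<Longrightarrow> finite (carrier G) \<Longrightarrow>
   is_quotient C G X \<rho> Q q \<Longrightarrow> quotient_fibre_bij Fo Fa G X \<rho> Q q"
  for G :: "'g monoid"
  using g5p(3) by simp

lemma quot_ex: "group_action C G X \<rho> \<Longrightarrow> finite (carrier G) \<Longrightarrow>
   \<exists>Q q. is_quotient C G X \<rho> Q q"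
  for G :: "'g monoid"
  using g2p(3) by simp

lemma init_ex: "\<exists>I. is_initial C I"
  using g2p(1) .

lemma cop_hom: "is_coproduct C A1 A2 S i1 i2 \<Longrightarrow> i1 \<in> hom C A1 S \<and> i2 \<in> hom C A2 S"
  unfolding is_coproduct_def by auto

lemma cop_sym: "is_coproduct C A1 A2 S i1 i2 \<Longrightarrow> is_coproduct C A2 A1 S i2 i1"
  unfolding is_coproduct_def by (auto simp: conj_commute)

lemma cop_unique: "is_coproduct C A1 A2 S i1 i2 \<Longrightarrow> k \<in> hom C S Z \<Longrightarrow> k' \<in> hom C S Z \<Longrightarrow>
   cat_comp C k i1 = cat_comp C k' i1 \<Longrightarrow> cat_comp C k i2 = cat_comp C k' i2 \<Longrightarrow> k = k'"
proof -
  assume a: "is_coproduct C A1 A2 S i1 i2" "k \<in> hom C S Z" "k' \<in> hom C S Z"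
    "cat_comp C k i1 = cat_comp C k' i1" "cat_comp C k i2 = cat_comp C k' i2"
  have h: "i1 \<in> hom C A1 S" "i2 \<in> hom C A2 S" using cop_hom[OF a(1)] by auto
  have "Z \<in> cat_obj C" using hom_obj[OF a(2)] by auto
  moreover have "cat_comp C k i1 \<in> hom C A1 Z" "cat_comp C k i2 \<in> hom C A2 Z"
    using comp_hom h a by auto
  ultimately have "\<exists>!kk. kk \<in> hom C S Z \<and> cat_comp C kk i1 = cat_comp C k i1 \<and> cat_comp C kk i2 = cat_comp C k i2"
    using a(1) unfolding is_coproduct_def by blast
  then show "k = k'" using a by metis
qed

lemma empty_initial: assumes X: "X \<in> cat_obj C" and e: "Fo X = {}" shows "is_initial C X"
proof -
  obtain I where I: "is_initial C I" using init_ex by blast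
  then obtain f where f: "f \<in> hom C I X" unfolding is_initial_def using X by blast
  have "Fo I = {}" using initial_empty I by auto
  then have "bij_betw (Fa f) (Fo I) (Fo X)" using e by (simp add: bij_betw_def)
  then obtain g where g: "g \<in> hom C X I" "cat_comp C g f = cat_id C I" "cat_comp C f g = cat_id C X"
    using bij_iso f by blast
  show ?thesis unfolding is_initial_def
  proof (intro conjI ballI X)
    fix Z assume Z: "Z \<in> cat_obj C"
    then obtain k where k: "k \<in> hom C I Z" using I unfolding is_initial_def by blast
    have "cat_comp C k g \<in> hom C X Z" using comp_hom g k by auto
    moreover have "h1 = h2" if "h1 \<in> hom C X Z" "h2 \<in> hom C X Z" for h1 h2
    proof -
      have "cat_comp C h1 f \<in> hom C I Z" "cat_comp C h2 f \<in> hom C I Z" using comp_hom f that by auto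
      then have eq: "cat_comp C h1 f = cat_comp C h2 f" using I Z unfolding is_initial_def by blast
      have "h1 = cat_comp C h1 (cat_comp C f g)" using id_r that g by auto
      also have "\<dots> = cat_comp C (cat_comp C h1 f) g" by (rule assoc[OF g(1) f that(1)])
      also have "\<dots> = cat_comp C (cat_comp C h2 f) g" using eq by simp
      also have "\<dots> = cat_comp C h2 (cat_comp C f g)" by (rule assoc[OF g(1) f that(2), symmetric])
      also have "\<dots> = h2" using id_r that g by auto
      finally show ?thesis .
    qed
    ultimately show "\<exists>!f. f \<in> hom C X Z" by blast
  qed
qed

lemma ne_nonempty: "X \<in> cat_obj C \<Longrightarrow> \<not> is_initial C X \<Longrightarrow> Fo X \<noteq> {}"
  using empty_initial by blast

lemma cop_init_bij: assumes c: "is_coproduct C I J S m j" and J: "is_initial C J"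
  shows "bij_betw (Fa m) (Fo I) (Fo S)"
  using cop_F[OF c] initial_empty[OF J] by (simp add: bij_betw_def)


lemma g3p: assumes f: "f \<in> hom C X Y"
  shows "\<exists>I e m J j. strict_epi C e \<and> e \<in> hom C X I \<and>
      mono C m \<and> m \<in> hom C I Y \<and> f = cat_comp C m e \<and>
      mono C j \<and> j \<in> hom C J Y \<and> is_coproduct C I J Y m j"
proof -
  have "f \<in> cat_arr C" using homD[OF f] by simp
  then have "\<exists>I e m J j. strict_epi C e \<and> e \<in> hom C (cat_dom C f) I \<and>
      mono C m \<and> m \<in> hom C I (cat_cod C f) \<and> f = cat_comp C m e \<and>
      mono C j \<and> j \<in> hom C J (cat_cod C f) \<and>
      is_coproduct C I J (cat_cod C f) m j" by (rule bspec[OF g3[unfolded G3_def]])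
  then show ?thesis using homD[OF f] by simp
qed

lemma term_ex: "\<exists>T. is_terminal C T"
  using g1 unfolding G1_def by simp

lemma pb_ex: assumes "f \<in> hom C X S" "g \<in> hom C Y S" shows "\<exists>P p1 p2. is_pullback C f g P p1 p2"
proof -
  have "\<forall>f\<in>cat_arr C. \<forall>g\<in>cat_arr C. cat_cod C f = cat_cod C g \<longrightarrow>
        (\<exists>P p1 p2. is_pullback C f g P p1 p2)" using g1 unfolding G1_def by simp
  then show ?thesis using homD[OF assms(1)] homD[OF assms(2)] by simp
qed

lemma pb_props: assumes "is_pullback C f g P p1 p2" "f \<in> hom C X S" "g \<in> hom C Y S"
  shows "p1 \<in> hom C P X" "p2 \<in> hom C P Y" "cat_comp C f p1 = cat_comp C g p2"
  using assms unfolding is_pullback_def hom_def by auto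

lemma pb_univ: assumes "is_pullback C f g P p1 p2" "f \<in> hom C X S" "g \<in> hom C Y S"
  "W \<in> cat_obj C" "u \<in> hom C W X" "v \<in> hom C W Y" "cat_comp C f u = cat_comp C g v"
  shows "\<exists>k\<in>hom C W P. cat_comp C p1 k = u \<and> cat_comp C p2 k = v"
proof -
  have "\<forall>W\<in>cat_obj C. \<forall>u\<in>hom C W (cat_dom C f). \<forall>v\<in>hom C W (cat_dom C g).
         cat_comp C f u = cat_comp C g v \<longrightarrow>
         (\<exists>!k. k \<in> hom C W P \<and> cat_comp C p1 k = u \<and> cat_comp C p2 k = v)"
    using assms(1) unfolding is_pullback_def by blast
  then have "\<exists>!k. k \<in> hom C W P \<and> cat_comp C p1 k = u \<and> cat_comp C p2 k = v"
    using assms(4-7) homD[OF assms(2)] homD[OF assms(3)] by simp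
  then show ?thesis by blast
qed

lemma pb_bij: assumes "is_pullback C f g P p1 p2" "f \<in> hom C X S" "g \<in> hom C Y S"
  shows "bij_betw (\<lambda>z. (Fa p1 z, Fa p2 z)) (Fo P)
          {(x, y). x \<in> Fo X \<and> y \<in> Fo Y \<and> Fa f x = Fa g y}"
proof -
  have "\<forall>f g P p1 p2. is_pullback C f g P p1 p2 \<longrightarrow>
        bij_betw (\<lambda>z. (Fa p1 z, Fa p2 z)) (Fo P)
          {(x, y). x \<in> Fo (cat_dom C f) \<and> y \<in> Fo (cat_dom C g) \<and> Fa f x = Fa g y}"
    using g4 unfolding G4_def by simp
  then have "bij_betw (\<lambda>z. (Fa p1 z, Fa p2 z)) (Fo P)
          {(x, y). x \<in> Fo (cat_dom C f) \<and> y \<in> Fo (cat_dom C g) \<and> Fa f x = Fa g y}"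
    using assms(1) by blast
  then show ?thesis using homD[OF assms(2)] homD[OF assms(3)] by simp
qed

lemma term_one: "is_terminal C T \<Longrightarrow> \<exists>!x. x \<in> Fo T"
  using g4 unfolding G4_def by simp

lemma conn_obj: "connected_obj C X \<Longrightarrow> X \<in> cat_obj C"
  unfolding connected_obj_def by simp

lemma conn_split: "connected_obj C X \<Longrightarrow> is_coproduct C A1 A2 X i1 i2 \<Longrightarrow> is_initial C A1 \<or> is_initial C A2"
  unfolding connected_obj_def by blast

lemma conn_finite: assumes cX: "connected_obj C X" shows "finite (Fo X)"
proof (cases "Fo X = {}")
  case True thus ?thesis by simp
next
  case False
  then obtain x where x: "x \<in> Fo X" by auto
  have X: "X \<in> cat_obj C" using cX conn_obj by auto
  obtain Y y f where Y: "Y \<in> cat_obj C" "finite (Fo Y)" "y \<in> Fo Y" "f \<in> hom C Y X" "Fa f y = x"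
    using g0 x X unfolding G0_def by blast
  obtain I e m J j where d: "strict_epi C e" "e \<in> hom C Y I" "m \<in> hom C I X"
    "is_coproduct C I J X m j" using g3p[OF Y(4)] by blast
  have "Fa e y \<in> Fo I" using F_map d Y by auto
  then have "\<not> is_initial C I" using initial_empty by auto
  then have "is_initial C J" using conn_split[OF cX d(4)] by auto
  then have "Fo X = Fa m ` Fo I" using cop_init_bij[OF d(4)] by (simp add: bij_betw_def)
  moreover have "Fo I = Fa e ` Fo Y" using se_surj[OF d(1)] homD[OF d(2)] by simp
  ultimately show ?thesis using Y(2) by simp
qed

lemma img_summand: assumes cD: "connected_obj C D" and h: "h \<in> hom C D S"
  and c: "is_coproduct C Q1 Q2 S i1 i2"
  shows "Fa h ` Fo D \<subseteq> Fa i1 ` Fo Q1 \<or> Fa h ` Fo D \<subseteq> Fa i2 ` Fo Q2"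
proof -
  have i: "i1 \<in> hom C Q1 S" "i2 \<in> hom C Q2 S" using cop_hom[OF c] by auto
  obtain P p1 p2 where pb: "is_pullback C h i1 P p1 p2" using pb_ex[OF h i(1)] by blast
  note pp = pb_props[OF pb h i(1)]
  note bj = pb_bij[OF pb h i(1)]
  obtain I e m J j where d: "strict_epi C e" "e \<in> hom C P I" "m \<in> hom C I D"
    "p1 = cat_comp C m e" "is_coproduct C I J D m j" using g3p[OF pp(1)] by blast
  have cF: "Fa i1 ` Fo Q1 \<union> Fa i2 ` Fo Q2 = Fo S" using cop_F[OF c] by blast
  from conn_split[OF cD d(5)] show ?thesis
  proof
    assume I: "is_initial C I"
    have "Fo P = {}"
    proof (rule ccontr)
      assume "Fo P \<noteq> {}" then obtain w where "w \<in> Fo P" by auto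
      then have "Fa e w \<in> Fo I" using F_map d by auto
      then show False using initial_empty[OF I] by auto
    qed
    have "Fa h x \<in> Fa i2 ` Fo Q2" if x: "x \<in> Fo D" for x
    proof -
      have hx: "Fa h x \<in> Fo S" using F_map h x by auto
      show ?thesis
      proof (rule ccontr)
        assume "Fa h x \<notin> Fa i2 ` Fo Q2"
        then obtain y where y: "y \<in> Fo Q1" "Fa h x = Fa i1 y" using hx cF by auto
        then have "(x, y) \<in> {(x, y). x \<in> Fo D \<and> y \<in> Fo Q1 \<and> Fa h x = Fa i1 y}" using x by auto
        then have "(x, y) \<in> (\<lambda>z. (Fa p1 z, Fa p2 z)) ` Fo P" using bj by (simp add: bij_betw_def)
        then show False using \<open>Fo P = {}\<close> by auto
      qed
    qed
    then show ?thesis by auto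
  next
    assume J: "is_initial C J"
    have "Fo D = Fa m ` Fo I" using cop_init_bij[OF d(5) J] by (simp add: bij_betw_def)
    moreover have "Fo I = Fa e ` Fo P" using se_surj[OF d(1)] homD[OF d(2)] by simp
    ultimately have FD: "Fo D = Fa p1 ` Fo P" using F_comp[OF d(2) d(3)] d(4) by (simp add: image_image)
    have "Fa h x \<in> Fa i1 ` Fo Q1" if x: "x \<in> Fo D" for x
    proof -
      obtain w where w: "w \<in> Fo P" "x = Fa p1 w" using FD x by auto
      have "Fa h x = Fa (cat_comp C h p1) w" using F_comp[OF pp(1) h w(1)] w by simp
      also have "\<dots> = Fa (cat_comp C i1 p2) w" using pp(3) by simp
      also have "\<dots> = Fa i1 (Fa p2 w)" using F_comp[OF pp(2) i(1) w(1)] by simp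
      finally show ?thesis using F_map[OF pp(2) w(1)] by auto
    qed
    then show ?thesis by auto
  qed
qed


lemma factor_summand: assumes cD: "connected_obj C D" and h: "h \<in> hom C D S"
  and c: "is_coproduct C Q1 Q2 S i1 i2" and d: "d \<in> Fo D" and z1: "z1 \<in> Fo Q1"
  and hd: "Fa h d = Fa i1 z1"
  shows "\<exists>h'\<in>hom C D Q1. h = cat_comp C i1 h' \<and> Fa h' d = z1"
proof -
  have i: "i1 \<in> hom C Q1 S" "i2 \<in> hom C Q2 S" using cop_hom[OF c] by auto
  have cF: "inj_on (Fa i1) (Fo Q1)" "Fa i1 ` Fo Q1 \<inter> Fa i2 ` Fo Q2 = {}" using cop_F[OF c] by auto
  have all: "Fa h ` Fo D \<subseteq> Fa i1 ` Fo Q1"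
  proof -
    have "Fa h d \<in> Fa i1 ` Fo Q1" using hd z1 by auto
    moreover have "Fa h d \<in> Fa h ` Fo D" using d by auto
    ultimately show ?thesis using img_summand[OF cD h c] cF(2) by blast
  qed
  obtain P p1 p2 where pb: "is_pullback C h i1 P p1 p2" using pb_ex[OF h i(1)] by blast
  note pp = pb_props[OF pb h i(1)]
  note bj = pb_bij[OF pb h i(1)]
  have key: "Fa i1 (Fa p2 w) = Fa h (Fa p1 w)" if w: "w \<in> Fo P" for w
  proof -
    have "Fa i1 (Fa p2 w) = Fa (cat_comp C i1 p2) w" using F_comp[OF pp(2) i(1) w] by simp
    also have "\<dots> = Fa (cat_comp C h p1) w" using pp(3) by simp
    also have "\<dots> = Fa h (Fa p1 w)" using F_comp[OF pp(1) h w] by simp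
    finally show ?thesis .
  qed
  have "bij_betw (Fa p1) (Fo P) (Fo D)"
    unfolding bij_betw_def
  proof
    show "inj_on (Fa p1) (Fo P)"
    proof (rule inj_onI)
      fix w w' assume w: "w \<in> Fo P" "w' \<in> Fo P" "Fa p1 w = Fa p1 w'"
      have "Fa i1 (Fa p2 w) = Fa i1 (Fa p2 w')" using key w by simp
      then have "Fa p2 w = Fa p2 w'" using cF(1) F_map[OF pp(2)] w inj_onD by metis
      then have "(Fa p1 w, Fa p2 w) = (Fa p1 w', Fa p2 w')" using w by simp
      then show "w = w'" using bj w unfolding bij_betw_def inj_on_def by blast
    qed
    show "Fa p1 ` Fo P = Fo D"
    proof
      show "Fa p1 ` Fo P \<subseteq> Fo D" using F_map[OF pp(1)] by auto
      show "Fo D \<subseteq> Fa p1 ` Fo P"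
      proof
        fix x assume x: "x \<in> Fo D"
        then obtain y where y: "y \<in> Fo Q1" "Fa h x = Fa i1 y" using all by auto
        then have "(x, y) \<in> {(x, y). x \<in> Fo D \<and> y \<in> Fo Q1 \<and> Fa h x = Fa i1 y}" using x by auto
        then have "(x, y) \<in> (\<lambda>z. (Fa p1 z, Fa p2 z)) ` Fo P" using bj by (simp add: bij_betw_def)
        then show "x \<in> Fa p1 ` Fo P" by auto
      qed
    qed
  qed
  then obtain q where q: "q \<in> hom C D P" "cat_comp C p1 q = cat_id C D" using bij_iso[OF pp(1)] by blast
  define h' where "h' = cat_comp C p2 q"
  have h'h: "h' \<in> hom C D Q1" unfolding h'_def using comp_hom[OF q(1) pp(2)] .
  have "cat_comp C i1 h' = cat_comp C (cat_comp C i1 p2) q" unfolding h'_def using assoc[OF q(1) pp(2) i(1)] .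
  also have "\<dots> = cat_comp C (cat_comp C h p1) q" using pp(3) by simp
  also have "\<dots> = cat_comp C h (cat_comp C p1 q)" using assoc[OF q(1) pp(1) h] by simp
  also have "\<dots> = h" using q(2) id_r[OF h] by simp
  finally have eq: "h = cat_comp C i1 h'" by simp
  have "Fa i1 (Fa h' d) = Fa i1 z1" using F_comp[OF h'h i(1) d] eq hd by simp
  then have "Fa h' d = z1" using cF(1) F_map[OF h'h d] z1 inj_onD by metis
  then show ?thesis using eq h'h by blast
qed

lemma card_summand: assumes c: "is_coproduct C A1 A2 S i1 i2" and fin: "finite (Fo S)"
  and ne: "Fo A2 \<noteq> {}"
  shows "finite (Fo A1) \<and> card (Fo A1) < card (Fo S)"
proof -
  have cF: "inj_on (Fa i1) (Fo A1)" "Fa i1 ` Fo A1 \<inter> Fa i2 ` Fo A2 = {}"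
    "Fa i1 ` Fo A1 \<union> Fa i2 ` Fo A2 = Fo S" using cop_F[OF c] by auto
  have sub: "Fa i1 ` Fo A1 \<subset> Fo S" using cF ne by blast
  then have f1: "finite (Fa i1 ` Fo A1)" using fin finite_subset by blast
  then have "finite (Fo A1)" using cF(1) finite_imageD by blast
  moreover have "card (Fo A1) = card (Fa i1 ` Fo A1)" using cF(1) card_image by metis
  moreover have "card (Fa i1 ` Fo A1) < card (Fo S)" using psubset_card_mono[OF fin sub] .
  ultimately show ?thesis by simp
qed

lemma component: "finite (Fo P) \<Longrightarrow> P \<in> cat_obj C \<Longrightarrow> z \<in> Fo P \<Longrightarrow>
  \<exists>K c \<iota>. connected_obj C K \<and> \<not> is_initial C K \<and> c \<in> Fo K \<and> \<iota> \<in> hom C K P \<and> Fa \<iota> c = z \<and>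
   (\<forall>D d k. connected_obj C D \<and> d \<in> Fo D \<and> k \<in> hom C D P \<and> Fa k d = z \<longrightarrow>
      (\<exists>k'\<in>hom C D K. Fa k' d = c))"
proof (induction "card (Fo P)" arbitrary: P z rule: less_induct)
  case less
  show ?case
  proof (cases "connected_obj C P")
    case True
    have "\<not> is_initial C P" using initial_empty less.prems by auto
    moreover have "cat_id C P \<in> hom C P P" "Fa (cat_id C P) z = z"
      using id_hom F_id less.prems by auto
    ultimately show ?thesis using True less.prems by blast
  next
    case False
    then obtain A1 A2 i1 i2 where c: "is_coproduct C A1 A2 P i1 i2"
      "\<not> is_initial C A1" "\<not> is_initial C A2"
      using less.prems unfolding connected_obj_def by blast
    have "\<exists>Q1 Q2 j1 j2 z1. is_coproduct C Q1 Q2 P j1 j2 \<and> \<not> is_initial C Q2 \<and> z1 \<in> Fo Q1 \<and> Fa j1 z1 = z"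
    proof -
      have "z \<in> Fa i1 ` Fo A1 \<union> Fa i2 ` Fo A2" using cop_F[OF c(1)] less.prems by auto
      then show ?thesis
      proof
        assume "z \<in> Fa i1 ` Fo A1" then show ?thesis using c by blast
      next
        assume "z \<in> Fa i2 ` Fo A2" then show ?thesis using c cop_sym[OF c(1)] by blast
      qed
    qed
    then obtain Q1 Q2 j1 j2 z1 where q: "is_coproduct C Q1 Q2 P j1 j2" "\<not> is_initial C Q2"
      "z1 \<in> Fo Q1" "Fa j1 z1 = z" by blast
    have jh: "j1 \<in> hom C Q1 P" "j2 \<in> hom C Q2 P" using cop_hom[OF q(1)] by auto
    have Q1: "Q1 \<in> cat_obj C" "Q2 \<in> cat_obj C" using hom_obj jh by auto
    have "Fo Q2 \<noteq> {}" using ne_nonempty Q1(2) q(2) by auto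
    then have cs: "finite (Fo Q1)" "card (Fo Q1) < card (Fo P)" using card_summand[OF q(1)] less.prems by auto
    obtain K c \<iota> where H: "connected_obj C K" "\<not> is_initial C K" "c \<in> Fo K" "\<iota> \<in> hom C K Q1" "Fa \<iota> c = z1"
      "\<forall>D d k. connected_obj C D \<and> d \<in> Fo D \<and> k \<in> hom C D Q1 \<and> Fa k d = z1 \<longrightarrow>
      (\<exists>k'\<in>hom C D K. Fa k' d = c)"
      using less.hyps[OF cs(2) cs(1) Q1(1) q(3)] by blast
    have "cat_comp C j1 \<iota> \<in> hom C K P" using comp_hom H(4) jh(1) by auto
    moreover have "Fa (cat_comp C j1 \<iota>) c = z" using F_comp[OF H(4) jh(1) H(3)] H(5) q(4) by simp
    moreover have "\<exists>k'\<in>hom C D K. Fa k' d = c"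
      if D: "connected_obj C D" "d \<in> Fo D" "k \<in> hom C D P" "Fa k d = z" for D d k
    proof -
      obtain k1 where k1: "k1 \<in> hom C D Q1" "Fa k1 d = z1"
        using factor_summand[OF D(1) D(3) q(1) D(2) q(3)] D(4) q(4) by metis
      then show ?thesis using H(6) D by blast
    qed
    ultimately show ?thesis using H by blast
  qed
qed


lemma Con_simps: "cat_comp (Con C) = cat_comp C" "cat_dom (Con C) = cat_dom C"
  "cat_cod (Con C) = cat_cod C" "cat_id (Con C) = cat_id C"
  "cat_obj (Con C) = {X \<in> cat_obj C. connected_obj C X \<and> \<not> is_initial C X}"
  unfolding Con_def full_sub_def by simp_all

lemma hom_Con: "f \<in> hom (Con C) X Y \<longleftrightarrow> f \<in> hom C X Y \<and> (connected_obj C X \<and> \<not> is_initial C X)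
   \<and> (connected_obj C Y \<and> \<not> is_initial C Y)"
  unfolding Con_def full_sub_def hom_def by auto

lemma arr_Con: "f \<in> cat_arr (Con C) \<longleftrightarrow> f \<in> hom C (cat_dom C f) (cat_cod C f) \<and>
   (connected_obj C (cat_dom C f) \<and> \<not> is_initial C (cat_dom C f))
   \<and> (connected_obj C (cat_cod C f) \<and> \<not> is_initial C (cat_cod C f))"
  unfolding Con_def full_sub_def hom_def by auto

lemma arr_strict_C: assumes f: "f \<in> hom C X Y" and cX: "connected_obj C X" "\<not> is_initial C X"
  and cY: "connected_obj C Y"
  shows "strict_epi C f"
proof -
  obtain I e m J j where d: "strict_epi C e" "e \<in> hom C X I" "m \<in> hom C I Y"
    "f = cat_comp C m e" "is_coproduct C I J Y m j" using g3p[OF f] by blast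
  have "Fo X \<noteq> {}" using ne_nonempty conn_obj cX by auto
  then obtain x where "x \<in> Fo X" by auto
  then have "Fa e x \<in> Fo I" using F_map d by auto
  then have "\<not> is_initial C I" using initial_empty by auto
  then have "is_initial C J" using conn_split[OF cY d(5)] by auto
  then obtain m' where m': "m' \<in> hom C Y I" "cat_comp C m' m = cat_id C I" "cat_comp C m m' = cat_id C Y"
    using bij_iso[OF d(3) cop_init_bij[OF d(5)]] by blast
  show ?thesis unfolding strict_epi_def
  proof (intro conjI allI impI)
    show "f \<in> cat_arr C" using homD[OF f] by simp
    fix g assume cg: "compatible C f g"
    define Z where "Z = cat_cod C g"
    have cg1: "g \<in> cat_arr C" "cat_dom C g = cat_dom C f" using conjunct1[OF cg[unfolded compatible_def]] conjunct1[OF conjunct2[OF cg[unfolded compatible_def]]] by auto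
    have cg2: "\<forall>W\<in>cat_obj C. \<forall>u\<in>hom C W (cat_dom C f). \<forall>v\<in>hom C W (cat_dom C f).
         cat_comp C f u = cat_comp C f v \<longrightarrow> cat_comp C g u = cat_comp C g v"
      using conjunct2[OF conjunct2[OF cg[unfolded compatible_def]]] .
    have cg2': "\<forall>W\<in>cat_obj C. \<forall>u\<in>hom C W X. \<forall>v\<in>hom C W X.
         cat_comp C f u = cat_comp C f v \<longrightarrow> cat_comp C g u = cat_comp C g v"
      using cg2 unfolding homD[OF f, THEN conjunct2, THEN conjunct1] .
    have gh: "g \<in> hom C X Z" unfolding Z_def hom_def using cg1 homD[OF f] by simp
    have "compatible C e g" unfolding compatible_def
    proof (intro conjI ballI impI)
      show "g \<in> cat_arr C" using homD[OF gh] by simp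
      show "cat_dom C g = cat_dom C e" using homD[OF gh] homD[OF d(2)] by simp
      fix W u v assume W: "W \<in> cat_obj C" "u \<in> hom C W (cat_dom C e)" "v \<in> hom C W (cat_dom C e)"
        "cat_comp C e u = cat_comp C e v"
      have uv: "u \<in> hom C W X" "v \<in> hom C W X" using W(2,3) homD[OF d(2)] by simp_all
      have "cat_comp C f u = cat_comp C m (cat_comp C e u)"
        by (simp only: d(4) assoc[OF uv(1) d(2) d(3)])
      also have "\<dots> = cat_comp C m (cat_comp C e v)" by (simp only: W(4))
      also have "\<dots> = cat_comp C f v"
        by (simp only: d(4) assoc[OF uv(2) d(2) d(3)])
      finally have "cat_comp C f u = cat_comp C f v" .
      then show "cat_comp C g u = cat_comp C g v" using cg2' W(1) uv by blast
    qed
    moreover have "\<forall>g. compatible C e g \<longrightarrow>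
          (\<exists>!k. k \<in> hom C (cat_cod C e) (cat_cod C g) \<and> g = cat_comp C k e)"
      using d(1) unfolding strict_epi_def by simp
    ultimately have "\<exists>!k. k \<in> hom C (cat_cod C e) (cat_cod C g) \<and> g = cat_comp C k e"
      by simp
    then have "\<exists>!k. k \<in> hom C I Z \<and> g = cat_comp C k e"
      using homD[OF d(2)] Z_def by simp
    then obtain k0 where k0: "k0 \<in> hom C I Z \<and> g = cat_comp C k0 e"
      and k0u: "\<And>k. k \<in> hom C I Z \<and> g = cat_comp C k e \<Longrightarrow> k = k0"
      by blast
    from k0 have k0: "k0 \<in> hom C I Z" "g = cat_comp C k0 e" by auto
    have kh: "cat_comp C k0 m' \<in> hom C Y Z" using comp_hom m'(1) k0(1) by auto
    have "cat_comp C (cat_comp C k0 m') m = cat_comp C k0 (cat_comp C m' m)"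
      using assoc[OF d(3) m'(1) k0(1)] by simp
    also have "\<dots> = k0" using m'(2) id_r k0(1) by simp
    finally have e1: "cat_comp C (cat_comp C k0 m') m = k0" .
    have ex: "g = cat_comp C (cat_comp C k0 m') f"
      using assoc[OF d(2) d(3) kh] d(4) e1 k0(2) by simp
    show "\<exists>!k. k \<in> hom C (cat_cod C f) (cat_cod C g) \<and> g = cat_comp C k f"
    proof
      show "cat_comp C k0 m' \<in> hom C (cat_cod C f) (cat_cod C g) \<and> g = cat_comp C (cat_comp C k0 m') f"
        using kh ex homD[OF f] Z_def by simp
      fix k1 assume k1: "k1 \<in> hom C (cat_cod C f) (cat_cod C g) \<and> g = cat_comp C k1 f"
      then have k1h: "k1 \<in> hom C Y Z" using conjunct1[OF k1] homD[OF f] unfolding Z_def by simp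
      have "g = cat_comp C (cat_comp C k1 m) e" using assoc[OF d(2) d(3) k1h] d(4) k1 by simp
      then have "cat_comp C k1 m = k0" using k0u comp_hom[OF d(3) k1h] by simp
      have "k1 = cat_comp C k1 (cat_comp C m m')" using m'(3) id_r k1h by simp
      also have "\<dots> = cat_comp C (cat_comp C k1 m) m'" using assoc[OF m'(1) d(3) k1h] by simp
      finally show "k1 = cat_comp C k0 m'" using \<open>cat_comp C k1 m = k0\<close> by simp
    qed
  qed
qed


lemma compat_fin:
  assumes f: "f \<in> hom C X Y" and g: "g \<in> hom C X Z"
  and H: "\<And>W u v. connected_obj C W \<Longrightarrow> \<not> is_initial C W \<Longrightarrow> u \<in> hom C W X \<Longrightarrow> v \<in> hom C W X
     \<Longrightarrow> cat_comp C f u = cat_comp C f v \<Longrightarrow> cat_comp C g u = cat_comp C g v"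
  shows "finite (Fo W) \<Longrightarrow> W \<in> cat_obj C \<Longrightarrow> u \<in> hom C W X \<Longrightarrow> v \<in> hom C W X
     \<Longrightarrow> cat_comp C f u = cat_comp C f v \<Longrightarrow> cat_comp C g u = cat_comp C g v"
proof (induction "card (Fo W)" arbitrary: W u v rule: less_induct)
  case less
  consider (i) "is_initial C W" | (c) "connected_obj C W \<and> \<not> is_initial C W"
    | (s) "\<not> connected_obj C W \<and> \<not> is_initial C W" by blast
  then show ?case
  proof cases
    case i
    have "X \<in> cat_obj C" using hom_obj[OF f] by simp
    then have "\<exists>!h. h \<in> hom C W X" using i unfolding is_initial_def by blast
    then have "u = v" using less.prems by blast
    then show ?thesis by simp
  next
    case c
    then show ?thesis using H less.prems by blast
  next
    case s
    then obtain A1 A2 i1 i2 where c: "is_coproduct C A1 A2 W i1 i2"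
      "\<not> is_initial C A1" "\<not> is_initial C A2"
      using less.prems unfolding connected_obj_def by blast
    have ih: "i1 \<in> hom C A1 W" "i2 \<in> hom C A2 W" using cop_hom[OF c(1)] by auto
    have A: "A1 \<in> cat_obj C" "A2 \<in> cat_obj C" using hom_obj ih by auto
    have ne: "Fo A1 \<noteq> {}" "Fo A2 \<noteq> {}" using ne_nonempty A c by auto
    have cs1: "finite (Fo A1)" "card (Fo A1) < card (Fo W)" using card_summand[OF c(1) less.prems(1) ne(2)] by auto
    have cs2: "finite (Fo A2)" "card (Fo A2) < card (Fo W)" using card_summand[OF cop_sym[OF c(1)] less.prems(1) ne(1)] by auto
    have gu: "cat_comp C g u \<in> hom C W Z" "cat_comp C g v \<in> hom C W Z" using comp_hom less.prems g by auto
    have part: "cat_comp C (cat_comp C g u) i = cat_comp C (cat_comp C g v) i"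
      if i: "i \<in> hom C A W" "finite (Fo A)" "card (Fo A) < card (Fo W)" "A \<in> cat_obj C" for i A
    proof -
      have ui: "cat_comp C u i \<in> hom C A X" "cat_comp C v i \<in> hom C A X" using comp_hom i(1) less.prems by auto
      have "cat_comp C f (cat_comp C u i) = cat_comp C (cat_comp C f u) i" by (rule assoc[OF i(1) less.prems(3) f])
      also have "\<dots> = cat_comp C (cat_comp C f v) i" by (simp only: less.prems(5))
      also have "\<dots> = cat_comp C f (cat_comp C v i)" by (rule assoc[OF i(1) less.prems(4) f, symmetric])
      finally have "cat_comp C g (cat_comp C u i) = cat_comp C g (cat_comp C v i)"
        using less.hyps[OF i(3) i(2) i(4) ui] by blast
      then show ?thesis by (simp only: assoc[OF i(1) less.prems(3) g] assoc[OF i(1) less.prems(4) g])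
    qed
    show ?thesis
      by (rule cop_unique[OF c(1) gu part[OF ih(1) cs1 A(1)] part[OF ih(2) cs2 A(2)]])
  qed
qed

lemma strict_Con: assumes f: "f \<in> hom C X Y" and cX: "connected_obj C X" "\<not> is_initial C X"
  and cY: "connected_obj C Y" "\<not> is_initial C Y"
  shows "strict_epi (Con C) f"
proof -
  have sC: "strict_epi C f" using arr_strict_C[OF f cX cY(1)] .
  show ?thesis unfolding strict_epi_def
  proof (intro conjI allI impI)
    show "f \<in> cat_arr (Con C)" using arr_Con homD[OF f] f cX cY by simp
    fix g assume cg: "compatible (Con C) f g"
    have cg1: "g \<in> cat_arr (Con C)" "cat_dom (Con C) g = cat_dom (Con C) f"
      using conjunct1[OF cg[unfolded compatible_def]] conjunct1[OF conjunct2[OF cg[unfolded compatible_def]]] by auto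
    have cg2: "\<forall>W\<in>cat_obj (Con C). \<forall>u\<in>hom (Con C) W (cat_dom (Con C) f). \<forall>v\<in>hom (Con C) W (cat_dom (Con C) f).
         cat_comp (Con C) f u = cat_comp (Con C) f v \<longrightarrow> cat_comp (Con C) g u = cat_comp (Con C) g v"
      using conjunct2[OF conjunct2[OF cg[unfolded compatible_def]]] .
    define Z where "Z = cat_cod C g"
    have gd: "cat_dom C g = X" using cg1(2) homD[OF f] unfolding Con_simps by simp
    have ga: "g \<in> hom C (cat_dom C g) (cat_cod C g) \<and>
   (connected_obj C (cat_dom C g) \<and> \<not> is_initial C (cat_dom C g))
   \<and> (connected_obj C (cat_cod C g) \<and> \<not> is_initial C (cat_cod C g))" using cg1(1) arr_Con by blast
    have gh: "g \<in> hom C X Z" and cZ: "connected_obj C Z" "\<not> is_initial C Z"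
      using ga unfolding gd Z_def by auto
    have H: "cat_comp C g u = cat_comp C g v" if W: "connected_obj C W" "\<not> is_initial C W"
      "u \<in> hom C W X" "v \<in> hom C W X" "cat_comp C f u = cat_comp C f v" for W u v
    proof -
      have "W \<in> cat_obj (Con C)" using W conn_obj unfolding Con_simps by simp
      moreover have "u \<in> hom (Con C) W (cat_dom (Con C) f)" "v \<in> hom (Con C) W (cat_dom (Con C) f)"
        unfolding hom_Con Con_simps using W cX homD[OF f] by auto
      ultimately show ?thesis using cg2 W(5) unfolding Con_simps by blast
    qed
    have "compatible C f g" unfolding compatible_def
    proof (intro conjI ballI impI)
      show "g \<in> cat_arr C" using homD[OF gh] by simp
      show "cat_dom C g = cat_dom C f" using homD[OF gh] homD[OF f] by simp
      fix W u v assume W: "W \<in> cat_obj C" "u \<in> hom C W (cat_dom C f)" "v \<in> hom C W (cat_dom C f)"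
        "cat_comp C f u = cat_comp C f v"
      have uv: "u \<in> hom C W X" "v \<in> hom C W X" using W(2,3) homD[OF f] by simp_all
      obtain P p1 p2 where pb: "is_pullback C f f P p1 p2" using pb_ex[OF f f] by blast
      note pp = pb_props[OF pb f f]
      note bj = pb_bij[OF pb f f]
      have "{(x, y). x \<in> Fo X \<and> y \<in> Fo X \<and> Fa f x = Fa f y} \<subseteq> Fo X \<times> Fo X" by auto
      then have "finite {(x, y). x \<in> Fo X \<and> y \<in> Fo X \<and> Fa f x = Fa f y}"
        using conn_finite[OF cX(1)] finite_subset by blast
      then have fin: "finite (Fo P)" using bij_betw_finite[OF bj] by simp
      have Pobj: "P \<in> cat_obj C" using hom_obj[OF pp(1)] by simp
      have gp: "cat_comp C g p1 = cat_comp C g p2"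
        by (rule compat_fin[OF f gh H fin Pobj pp(1) pp(2) pp(3)])
      obtain k where k: "k \<in> hom C W P" "cat_comp C p1 k = u" "cat_comp C p2 k = v"
        using pb_univ[OF pb f f W(1) uv W(4)] by blast
      have "cat_comp C g u = cat_comp C (cat_comp C g p1) k"
        using assoc[OF k(1) pp(1) gh] k(2) by simp
      also have "\<dots> = cat_comp C (cat_comp C g p2) k" by (simp only: gp)
      also have "\<dots> = cat_comp C g v"
        using assoc[OF k(1) pp(2) gh] k(3) by simp
      finally show "cat_comp C g u = cat_comp C g v" .
    qed
    then have "\<exists>!k. k \<in> hom C (cat_cod C f) (cat_cod C g) \<and> g = cat_comp C k f"
      using sC unfolding strict_epi_def by blast
    then have "\<exists>!k. k \<in> hom C Y Z \<and> g = cat_comp C k f" using homD[OF f] unfolding Z_def by simp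
    moreover have "k \<in> hom (Con C) Y Z \<longleftrightarrow> k \<in> hom C Y Z" for k
      unfolding hom_Con using cY cZ by simp
    ultimately show "\<exists>!k. k \<in> hom (Con C) (cat_cod (Con C) f) (cat_cod (Con C) g) \<and> g = cat_comp (Con C) k f"
      unfolding Con_simps using homD[OF f] Z_def by simp
  qed
qed

lemma img_conn: assumes cA: "connected_obj C A" and q: "q \<in> hom C A Q" and s: "Fa q ` Fo A = Fo Q"
  shows "connected_obj C Q"
  unfolding connected_obj_def
proof (intro conjI allI impI)
  show "Q \<in> cat_obj C" using hom_obj[OF q] by simp
  fix A1 A2 i1 i2 assume c: "is_coproduct C A1 A2 Q i1 i2"
  have ih: "i1 \<in> hom C A1 Q" "i2 \<in> hom C A2 Q" using cop_hom[OF c] by auto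
  have A: "A1 \<in> cat_obj C" "A2 \<in> cat_obj C" using hom_obj ih by auto
  have cF: "Fa i1 ` Fo A1 \<inter> Fa i2 ` Fo A2 = {}" "Fa i1 ` Fo A1 \<union> Fa i2 ` Fo A2 = Fo Q"
    using cop_F[OF c] by auto
  from img_summand[OF cA q c] show "is_initial C A1 \<or> is_initial C A2"
  proof
    assume sub: "Fa q ` Fo A \<subseteq> Fa i1 ` Fo A1"
    have "Fa i2 ` Fo A2 \<subseteq> Fa i1 ` Fo A1" using cF(2) s sub by (metis Un_upper2 order_trans)
    then have "Fa i2 ` Fo A2 = {}" using cF(1) by auto
    then have "Fo A2 = {}" by simp
    then show ?thesis using empty_initial[OF A(2)] by simp
  next
    assume sub: "Fa q ` Fo A \<subseteq> Fa i2 ` Fo A2"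
    have "Fa i1 ` Fo A1 \<subseteq> Fa i2 ` Fo A2" using cF(2) s sub by (metis Un_upper1 order_trans)
    then have "Fa i1 ` Fo A1 = {}" using cF(1) by auto
    then have "Fo A1 = {}" by simp
    then show ?thesis using empty_initial[OF A(1)] by simp
  qed
qed

lemma term_unique: "is_terminal C T \<Longrightarrow> D \<in> cat_obj C \<Longrightarrow> \<exists>!f. f \<in> hom C D T"
  unfolding is_terminal_def by blast

lemma term_Con: assumes T: "is_terminal C T" shows "connected_obj C T" "\<not> is_initial C T"
proof -
  have Tobj: "T \<in> cat_obj C" using T unfolding is_terminal_def by simp
  obtain t where t: "t \<in> Fo T" "\<And>x. x \<in> Fo T \<Longrightarrow> x = t" using term_one[OF T] by blast
  show "\<not> is_initial C T" using initial_empty t(1) by auto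
  show "connected_obj C T" unfolding connected_obj_def
  proof (intro conjI allI impI Tobj)
    fix A1 A2 i1 i2 assume c: "is_coproduct C A1 A2 T i1 i2"
    have ih: "i1 \<in> hom C A1 T" "i2 \<in> hom C A2 T" using cop_hom[OF c] by auto
    have A: "A1 \<in> cat_obj C" "A2 \<in> cat_obj C" using hom_obj ih by auto
    have cF: "Fa i1 ` Fo A1 \<inter> Fa i2 ` Fo A2 = {}" "Fa i1 ` Fo A1 \<union> Fa i2 ` Fo A2 = Fo T"
      using cop_F[OF c] by auto
    have "Fa i1 ` Fo A1 = {} \<or> Fa i2 ` Fo A2 = {}"
    proof (rule ccontr)
      assume "\<not> ?thesis"
      then obtain x y where "x \<in> Fa i1 ` Fo A1" "y \<in> Fa i2 ` Fo A2" by blast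
      moreover then have "x = t" "y = t" using cF t by blast+
      ultimately show False using cF by blast
    qed
    then show "is_initial C A1 \<or> is_initial C A2" using empty_initial A by auto
  qed
qed

lemma Gamma_Con: "p \<in> Gamma (Con C) Fo \<longleftrightarrow> snd p \<in> cat_obj C \<and> connected_obj C (snd p) \<and>
   \<not> is_initial C (snd p) \<and> fst p \<in> Fo (snd p)"
  unfolding Gamma_def Con_simps by (cases p) auto

lemma le_Con: "gamma_le (Con C) Fa p p' \<longleftrightarrow> (\<exists>f\<in>hom (Con C) (snd p) (snd p'). Fa f (fst p) = fst p')"
  unfolding gamma_le_def by simp

lemma le_trans: assumes p: "p \<in> Gamma (Con C) Fo" and a: "gamma_le (Con C) Fa p q" "gamma_le (Con C) Fa q r"
  shows "gamma_le (Con C) Fa p r"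
proof -
  obtain f where f: "f \<in> hom (Con C) (snd p) (snd q)" "Fa f (fst p) = fst q" using a(1) le_Con by blast
  obtain g where g: "g \<in> hom (Con C) (snd q) (snd r)" "Fa g (fst q) = fst r" using a(2) le_Con by blast
  have fC: "f \<in> hom C (snd p) (snd q)" and gC: "g \<in> hom C (snd q) (snd r)" using f g hom_Con by auto
  have "cat_comp C g f \<in> hom (Con C) (snd p) (snd r)"
    using comp_hom[OF fC gC] f(1) g(1) hom_Con by auto
  moreover have "Fa (cat_comp C g f) (fst p) = fst r"
    using F_comp[OF fC gC] p Gamma_Con f(2) g(2) by auto
  ultimately show ?thesis unfolding le_Con Con_simps by blast
qed

lemma top_meet: "\<exists>m\<in>Gamma (Con C) Fo. \<forall>n\<in>Gamma (Con C) Fo. gamma_le (Con C) Fa n m"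
proof -
  obtain T where T: "is_terminal C T" using term_ex by blast
  have Tobj: "T \<in> cat_obj C" using T unfolding is_terminal_def by simp
  obtain t where t: "t \<in> Fo T" "\<And>x. x \<in> Fo T \<Longrightarrow> x = t" using term_one[OF T] by blast
  have "(t, T) \<in> Gamma (Con C) Fo" using Gamma_Con term_Con[OF T] Tobj t(1) by simp
  moreover have "gamma_le (Con C) Fa n (t, T)" if n: "n \<in> Gamma (Con C) Fo" for n
  proof -
    have D: "snd n \<in> cat_obj C" "connected_obj C (snd n)" "\<not> is_initial C (snd n)" "fst n \<in> Fo (snd n)"
      using n Gamma_Con by auto
    obtain f where f: "f \<in> hom C (snd n) T" using term_unique[OF T D(1)] by blast
    have "f \<in> hom (Con C) (snd n) T" using f D term_Con[OF T] hom_Con by simp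
    moreover have "Fa f (fst n) = t" using t F_map[OF f D(4)] by blast
    ultimately show ?thesis unfolding le_Con by auto
  qed
  ultimately show ?thesis by blast
qed

lemma bin_meet: assumes p: "p \<in> Gamma (Con C) Fo" and q: "q \<in> Gamma (Con C) Fo"
  shows "\<exists>m\<in>Gamma (Con C) Fo. gamma_le (Con C) Fa m p \<and> gamma_le (Con C) Fa m q \<and>
    (\<forall>n\<in>Gamma (Con C) Fo. gamma_le (Con C) Fa n p \<and> gamma_le (Con C) Fa n q \<longrightarrow> gamma_le (Con C) Fa n m)"
proof -
  obtain a A where pa: "p = (a, A)" by (cases p)
  obtain b B where qb: "q = (b, B)" by (cases q)
  have A: "A \<in> cat_obj C" "connected_obj C A" "\<not> is_initial C A" "a \<in> Fo A" using p pa Gamma_Con by auto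
  have B: "B \<in> cat_obj C" "connected_obj C B" "\<not> is_initial C B" "b \<in> Fo B" using q qb Gamma_Con by auto
  obtain T where T: "is_terminal C T" using term_ex by blast
  obtain t where t: "t \<in> Fo T" "\<And>x. x \<in> Fo T \<Longrightarrow> x = t" using term_one[OF T] by blast
  obtain tA where tA: "tA \<in> hom C A T" using term_unique[OF T A(1)] by blast
  obtain tB where tB: "tB \<in> hom C B T" using term_unique[OF T B(1)] by blast
  obtain P p1 p2 where pb: "is_pullback C tA tB P p1 p2" using pb_ex[OF tA tB] by blast
  note pp = pb_props[OF pb tA tB]
  note bj = pb_bij[OF pb tA tB]
  have inj: "inj_on (\<lambda>z. (Fa p1 z, Fa p2 z)) (Fo P)" using bj unfolding bij_betw_def by simp
  have "Fa tA a = Fa tB b" using t(2)[OF F_map[OF tA A(4)]] t(2)[OF F_map[OF tB B(4)]] by simp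
  then have "(a, b) \<in> {(x, y). x \<in> Fo A \<and> y \<in> Fo B \<and> Fa tA x = Fa tB y}" using A B by auto
  then have "(a, b) \<in> (\<lambda>z. (Fa p1 z, Fa p2 z)) ` Fo P" using bj unfolding bij_betw_def by simp
  then obtain z where z0: "z \<in> Fo P" "(a, b) = (Fa p1 z, Fa p2 z)" by blast
  then have z: "z \<in> Fo P" "Fa p1 z = a" "Fa p2 z = b" by auto
  have "{(x, y). x \<in> Fo A \<and> y \<in> Fo B \<and> Fa tA x = Fa tB y} \<subseteq> Fo A \<times> Fo B" by auto
  then have "finite {(x, y). x \<in> Fo A \<and> y \<in> Fo B \<and> Fa tA x = Fa tB y}"
    using conn_finite[OF A(2)] conn_finite[OF B(2)] finite_subset by blast
  then have fin: "finite (Fo P)" using bij_betw_finite[OF bj] by simp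
  have Pobj: "P \<in> cat_obj C" using hom_obj[OF pp(1)] by simp
  obtain K c \<iota> where H: "connected_obj C K" "\<not> is_initial C K" "c \<in> Fo K" "\<iota> \<in> hom C K P" "Fa \<iota> c = z"
      "\<forall>D d k. connected_obj C D \<and> d \<in> Fo D \<and> k \<in> hom C D P \<and> Fa k d = z \<longrightarrow>
      (\<exists>k'\<in>hom C D K. Fa k' d = c)"
    using component[OF fin Pobj z(1)] by blast
  have Kobj: "K \<in> cat_obj C" using conn_obj H(1) by simp
  have mG: "(c, K) \<in> Gamma (Con C) Fo" using Gamma_Con H Kobj by simp
  have le1: "gamma_le (Con C) Fa (c, K) p"
  proof -
    have "cat_comp C p1 \<iota> \<in> hom (Con C) K A" using comp_hom[OF H(4) pp(1)] hom_Con H A by simp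
    moreover have "Fa (cat_comp C p1 \<iota>) c = a" using F_comp[OF H(4) pp(1) H(3)] H(5) z by simp
    ultimately show ?thesis unfolding le_Con pa by auto
  qed
  have le2: "gamma_le (Con C) Fa (c, K) q"
  proof -
    have "cat_comp C p2 \<iota> \<in> hom (Con C) K B" using comp_hom[OF H(4) pp(2)] hom_Con H B by simp
    moreover have "Fa (cat_comp C p2 \<iota>) c = b" using F_comp[OF H(4) pp(2) H(3)] H(5) z by simp
    ultimately show ?thesis unfolding le_Con qb by auto
  qed
  have "gamma_le (Con C) Fa n (c, K)" if n: "n \<in> Gamma (Con C) Fo" "gamma_le (Con C) Fa n p" "gamma_le (Con C) Fa n q" for n
  proof -
    obtain d D where nd: "n = (d, D)" by (cases n)
    have D: "D \<in> cat_obj C" "connected_obj C D" "\<not> is_initial C D" "d \<in> Fo D" using n(1) nd Gamma_Con by auto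
    obtain f where f: "f \<in> hom (Con C) D A" "Fa f d = a" using n(2) nd pa le_Con by auto
    obtain g where g: "g \<in> hom (Con C) D B" "Fa g d = b" using n(3) nd qb le_Con by auto
    have fC: "f \<in> hom C D A" and gC: "g \<in> hom C D B" using f g hom_Con by auto
    have "cat_comp C tA f = cat_comp C tB g"
      using comp_hom[OF fC tA] comp_hom[OF gC tB] term_unique[OF T D(1)] by blast
    then obtain k where k: "k \<in> hom C D P" "cat_comp C p1 k = f" "cat_comp C p2 k = g"
      using pb_univ[OF pb tA tB D(1) fC gC] by blast
    have kd: "Fa k d \<in> Fo P" using F_map[OF k(1) D(4)] .
    have "Fa p1 (Fa k d) = a" "Fa p2 (Fa k d) = b"
      using F_comp[OF k(1) pp(1) D(4)] F_comp[OF k(1) pp(2) D(4)] k f(2) g(2) by auto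
    then have "(\<lambda>z. (Fa p1 z, Fa p2 z)) (Fa k d) = (\<lambda>z. (Fa p1 z, Fa p2 z)) z" using z by simp
    then have kz: "Fa k d = z" using inj_onD[OF inj _ kd z(1)] by blast
    have "\<exists>k'\<in>hom C D K. Fa k' d = c" using H(6) D(2) D(4) k(1) kz by blast
    then obtain k' where k': "k' \<in> hom C D K" "Fa k' d = c" by blast
    have "k' \<in> hom (Con C) D K" using k' hom_Con D H by simp
    then show ?thesis unfolding le_Con nd using k'(2) by auto
  qed
  then show ?thesis using mG le1 le2 by blast
qed

lemma meets: "finite S \<Longrightarrow> S \<subseteq> Gamma (Con C) Fo \<Longrightarrow> \<exists>m. is_meet (Con C) Fo Fa S m"
proof (induction S rule: finite_induct)
  case empty
  then show ?case using top_meet unfolding is_meet_def by auto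
next
  case (insert x S)
  then obtain m where m: "is_meet (Con C) Fo Fa S m" by auto
  have mG: "m \<in> Gamma (Con C) Fo" using m unfolding is_meet_def by simp
  have xG: "x \<in> Gamma (Con C) Fo" using insert.prems by simp
  obtain m' where m': "m' \<in> Gamma (Con C) Fo" "gamma_le (Con C) Fa m' m" "gamma_le (Con C) Fa m' x"
    "\<forall>n\<in>Gamma (Con C) Fo. gamma_le (Con C) Fa n m \<and> gamma_le (Con C) Fa n x \<longrightarrow> gamma_le (Con C) Fa n m'"
    using bin_meet[OF mG xG] by blast
  have "is_meet (Con C) Fo Fa (insert x S) m'"
    unfolding is_meet_def
  proof (intro conjI ballI impI)
    show "m' \<in> Gamma (Con C) Fo" by (rule m'(1))
    fix s assume "s \<in> insert x S"
    then show "gamma_le (Con C) Fa m' s"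
    proof
      assume "s = x" then show ?thesis using m'(3) by simp
    next
      assume "s \<in> S"
      then have "gamma_le (Con C) Fa m s" using m unfolding is_meet_def by blast
      then show ?thesis using le_trans[OF m'(1) m'(2)] by blast
    qed
  next
    fix n assume n: "n \<in> Gamma (Con C) Fo" "\<forall>s\<in>insert x S. gamma_le (Con C) Fa n s"
    then have "gamma_le (Con C) Fa n m" using m unfolding is_meet_def by blast
    moreover have "gamma_le (Con C) Fa n x" using n by blast
    ultimately show "gamma_le (Con C) Fa n m'" using m'(4) n(1) by blast
  qed
  then show ?case by blast
qed



lemma C0_lem: "C0 (Con C) Fo Fa"
  unfolding C0_def
proof (intro conjI ballI)
  fix A assume "A \<in> cat_obj (Con C)"
  then show "Fo A \<noteq> {}" using ne_nonempty unfolding Con_simps by simp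
next
  fix f assume "f \<in> cat_arr (Con C)"
  then have "f \<in> hom C (cat_dom C f) (cat_cod C f) \<and>
   (connected_obj C (cat_dom C f) \<and> \<not> is_initial C (cat_dom C f))
   \<and> (connected_obj C (cat_cod C f) \<and> \<not> is_initial C (cat_cod C f))" using arr_Con by blast
  then show "strict_epi (Con C) f" using strict_Con by blast
qed

lemma C2_lem: "C2 (Con C) Fo Fa"
  unfolding C2_def
proof (intro conjI ballI allI impI)
  fix A assume "A \<in> cat_obj (Con C)"
  then show "finite (Fo A)" using conn_finite unfolding Con_simps by simp
next
  fix f assume "strict_epi (Con C) f"
  then have "f \<in> cat_arr (Con C)" unfolding strict_epi_def by simp
  then have "f \<in> hom C (cat_dom C f) (cat_cod C f) \<and>
   (connected_obj C (cat_dom C f) \<and> \<not> is_initial C (cat_dom C f))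
   \<and> (connected_obj C (cat_cod C f) \<and> \<not> is_initial C (cat_cod C f))" using arr_Con by blast
  then have "strict_epi C f" using arr_strict_C by blast
  then show "Fa f ` Fo (cat_dom (Con C) f) = Fo (cat_cod (Con C) f)" using se_surj unfolding Con_simps by simp
qed

lemma C3_lem: "C3 (Con C) Fo Fa"
  unfolding C3_def using meets by blast

lemma C1_lem: "C1 (Con C) Fo Fa gty"
  unfolding C1_def
proof (intro allI impI)
  fix G :: "'g monoid" and A \<rho> assume a: "group_action (Con C) G A \<rho> \<and> finite (carrier G)"
  have ga: "group_action C G A \<rho>" and cA: "connected_obj C A" "\<not> is_initial C A"
    using a unfolding group_action_def Con_simps hom_Con by auto
  have fin: "finite (carrier G)" using a by simp
  obtain Q q where qq: "is_quotient C G A \<rho> Q q" using quot_ex[OF ga fin] by blast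
  have qb: "quotient_fibre_bij Fo Fa G A \<rho> Q q" using quot_bij[OF ga fin qq] .
  have qd: "q \<in> hom C A Q" "\<forall>h\<in>carrier G. cat_comp C q (\<rho> h) = q"
    "\<forall>Z\<in>cat_obj C. \<forall>g\<in>hom C A Z. (\<forall>h\<in>carrier G. cat_comp C g (\<rho> h) = g) \<longrightarrow>
         (\<exists>!k. k \<in> hom C Q Z \<and> cat_comp C k q = g)"
    using qq unfolding is_quotient_def by auto
  have sur: "Fa q ` Fo A = Fo Q" using qb unfolding quotient_fibre_bij_def by simp
  have cQ: "connected_obj C Q" using img_conn[OF cA(1) qd(1) sur] .
  have "Fo A \<noteq> {}" using ne_nonempty conn_obj cA by blast
  then have "Fo Q \<noteq> {}" using sur by blast
  then have nQ: "\<not> is_initial C Q" using initial_empty by blast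
  have "is_quotient (Con C) G A \<rho> Q q"
    unfolding is_quotient_def Con_simps
  proof (intro conjI ballI impI)
    show "q \<in> hom (Con C) A Q" unfolding hom_Con using qd(1) cA cQ nQ by simp
    fix h assume "h \<in> carrier G" then show "cat_comp C q (\<rho> h) = q" using qd(2) by simp
  next
    fix Z g assume Z: "Z \<in> {X \<in> cat_obj C. connected_obj C X \<and> \<not> is_initial C X}"
      and g: "g \<in> hom (Con C) A Z" and gi: "\<forall>h\<in>carrier G. cat_comp C g (\<rho> h) = g"
    have gC: "g \<in> hom C A Z" using g hom_Con by simp
    have "\<exists>!k. k \<in> hom C Q Z \<and> cat_comp C k q = g" using qd(3) Z gC gi by blast
    moreover have "k \<in> hom (Con C) Q Z \<longleftrightarrow> k \<in> hom C Q Z" for k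
      unfolding hom_Con using Z cQ nQ by simp
    ultimately show "\<exists>!k. k \<in> hom (Con C) Q Z \<and> cat_comp C k q = g" by simp
  qed
  then show "\<exists>Q q. is_quotient (Con C) G A \<rho> Q q \<and> quotient_fibre_bij Fo Fa G A \<rho> Q q"
    using qb by blast
qed

end

theorem theorem4p13:
  fixes C :: "('o, 'a) cat"
    and Fo :: "'o \<Rightarrow> 'x set"
    and Fa :: "'a \<Rightarrow> 'x \<Rightarrow> 'x"
  assumes "category C"
    and "set_functor C Fo Fa"
    and "G0 C Fo Fa"
    and "G1 C"
    and "G2 C TYPE('g)"
    and "G3 C"
    and "G4 C Fo Fa"
    and "G5 C Fo Fa TYPE('g)"
    and "G6 C Fo Fa"
  shows "C0 (Con C) Fo Fa \<and> C1 (Con C) Fo Fa TYPE('g) \<and> C2 (Con C) Fo Fa \<and> C3 (Con C) Fo Fa"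
proof -
  interpret gal C Fo Fa "TYPE('g)"
    by (rule gal.intro) (rule assms)+
  show ?thesis using C0_lem C1_lem C2_lem C3_lem by blast
qed

end
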